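(* Suppose Assumptions 1–4 hold and $p$ is convex. Let $\mathbf{x}$ be a Cournot candidate which is not socially optimal, and let $\alpha_n=C_n'(x_n)$ for each $n$. Consider the modified model in which each cost function $C_n$ is replaced by $\overline C_n(x)=\alpha_n x$ for $x\ge0$ (same $p$, same $N$). Then for the modified model Assumptions 1–4 still hold, $\mathbf{x}$ is a Cournot candidate, and its efficiency $\overline\gamma(\mathbf{x})$ in the modified model satisfies $0<\overline\gamma(\mathbf{x})\le\gamma(\mathbf{x})$, where $\gamma(\mathbf{x})$ is its efficiency in the original model.
   Context: Cournot model: $N$ suppliers, inverse demand $p:[0,\infty)\to[0,\infty)$, supplier $n$ has cost $C_n:[0,\infty)\to[0,\infty)$ and chooses $x_n\ge0$; $X=\sum_n x_n$. $\partial_\pm$ denote right/left derivatives; $C_n'(0)$ is the right derivative at $0$. Assumption 1: each $C_n$ is convex, continuous, nondecreasing on $[0,\infty)$, continuously differentiable on $(0,\infty)$, with $C_n(0)=0$. Assumption 2: $p$ is continuous, nonnegative, nonincreasing, $p(0)>0$; its right derivative at $0$ exists and at every $q>0$ its left and right derivatives exist. Assumption 3: there exists $R>0$ such that $p(R)\le\min_n C_n'(0)$. Assumption 4: $p(0)>\min_n C_n'(0)$. Social welfare of $\mathbf{x}\ge0$: $W(\mathbf{x})=\int_0^X p(q)\,dq-\sum_{n=1}^N C_n(x_n)$; a social optimum $\mathbf{x}^S$ maximizes $W$ over nonnegative vectors (one exists under these assumptions). Efficiency of $\mathbf{x}\ge0$: $\gamma(\mathbf{x})=W(\mathbf{x})/W(\mathbf{x}^S)$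 (the denominator is positive and independent of the choice of social optimum). A nonnegative vector $\mathbf{x}$ is a Cournot candidate if for every $n$: $C_n'(x_n)\le p(X)+x_n\,\partial_-p(X)$ whenever $x_n>0$, and $C_n'(x_n)\ge p(X)+x_n\,\partial_+p(X)$. *)

theory Defs
  imports "HOL-Analysis.Analysis"
begin

text \<open>Suppliers are indexed by n < N; a production vector is a function nat => real,
  only its values at indices n < N matter.\<close>

definition rderiv :: "(real \<Rightarrow> real) \<Rightarrow> real \<Rightarrow> real" where
  "rderiv f x = (THE D. (f has_real_derivative D) (at x within {x..}))"

definition lderiv :: "(real \<Rightarrow> real) \<Rightarrow> real \<Rightarrow> real" where
  "lderiv f x = (THE D. (f has_real_derivative D) (at x within {..x}))"

definition nonneg_vec :: "nat \<Rightarrow> (nat \<Rightarrow> real) \<Rightarrow> bool" where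
  "nonneg_vec N x \<longleftrightarrow> (\<forall>n<N. 0 \<le> x n)"

definition total :: "nat \<Rightarrow> (nat \<Rightarrow> real) \<Rightarrow> real" where
  "total N x = (\<Sum>n<N. x n)"

definition assumption1 :: "nat \<Rightarrow> (nat \<Rightarrow> real \<Rightarrow> real) \<Rightarrow> bool" where
  "assumption1 N C \<longleftrightarrow> (\<forall>n<N.
      convex_on {0..} (C n) \<and> continuous_on {0..} (C n) \<and> mono_on {0..} (C n) \<and>
      (\<forall>x>0. C n differentiable (at x)) \<and> continuous_on {0<..} (deriv (C n)) \<and>
      C n 0 = 0)"

definition assumption2 :: "(real \<Rightarrow> real) \<Rightarrow> bool" where
  "assumption2 p \<longleftrightarrow>
      continuous_on {0..} p \<and> (\<forall>q\<ge>0. 0 \<le> p q) \<and>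
      (\<forall>a b. 0 \<le> a \<and> a \<le> b \<longrightarrow> p b \<le> p a) \<and> 0 < p 0 \<and>
      (\<exists>D. (p has_real_derivative D) (at 0 within {0..})) \<and>
      (\<forall>q>0. (\<exists>D. (p has_real_derivative D) (at q within {..q})) \<and>
              (\<exists>D. (p has_real_derivative D) (at q within {q..})))"

definition min_marginal_cost_at_0 :: "nat \<Rightarrow> (nat \<Rightarrow> real \<Rightarrow> real) \<Rightarrow> real" where
  "min_marginal_cost_at_0 N C = Min ((\<lambda>n. rderiv (C n) 0) ` {..<N})"

definition assumption3 :: "nat \<Rightarrow> (real \<Rightarrow> real) \<Rightarrow> (nat \<Rightarrow> real \<Rightarrow> real) \<Rightarrow> bool" where
  "assumption3 N p C \<longleftrightarrow> (\<exists>R>0. p R \<le> min_marginal_cost_at_0 N C)"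

definition assumption4 :: "nat \<Rightarrow> (real \<Rightarrow> real) \<Rightarrow> (nat \<Rightarrow> real \<Rightarrow> real) \<Rightarrow> bool" where
  "assumption4 N p C \<longleftrightarrow> p 0 > min_marginal_cost_at_0 N C"

definition welfare :: "nat \<Rightarrow> (real \<Rightarrow> real) \<Rightarrow> (nat \<Rightarrow> real \<Rightarrow> real) \<Rightarrow> (nat \<Rightarrow> real) \<Rightarrow> real" where
  "welfare N p C x = integral {0..total N x} p - (\<Sum>n<N. C n (x n))"

definition social_optimum :: "nat \<Rightarrow> (real \<Rightarrow> real) \<Rightarrow> (nat \<Rightarrow> real \<Rightarrow> real) \<Rightarrow> (nat \<Rightarrow> real) \<Rightarrow> bool" where
  "social_optimum N p C x \<longleftrightarrow> nonneg_vec N x \<and>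
      (\<forall>y. nonneg_vec N y \<longrightarrow> welfare N p C y \<le> welfare N p C x)"

definition efficiency :: "nat \<Rightarrow> (real \<Rightarrow> real) \<Rightarrow> (nat \<Rightarrow> real \<Rightarrow> real) \<Rightarrow> (nat \<Rightarrow> real) \<Rightarrow> real" where
  "efficiency N p C x = welfare N p C x / welfare N p C (SOME xS. social_optimum N p C xS)"

definition cournot_candidate :: "nat \<Rightarrow> (real \<Rightarrow> real) \<Rightarrow> (nat \<Rightarrow> real \<Rightarrow> real) \<Rightarrow> (nat \<Rightarrow> real) \<Rightarrow> bool" where
  "cournot_candidate N p C x \<longleftrightarrow> nonneg_vec N x \<and>
     (\<forall>n<N. (0 < x n \<longrightarrow> rderiv (C n) (x n) \<le> p (total N x) + x n * lderiv p (total N x)) \<and>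
            rderiv (C n) (x n) \<ge> p (total N x) + x n * rderiv p (total N x))"

end

theory Submission
  imports Defs
begin


lemma rderiv_eq:
  assumes "(f has_real_derivative D) (at x within {x..})"
  shows "rderiv f x = D"
  unfolding rderiv_def
proof (rule the_equality)
  show "(f has_real_derivative D) (at x within {x..})" by fact
  fix D' assume "(f has_real_derivative D') (at x within {x..})"
  then show "D' = D" using assms has_field_derivative_unique[of f D' x "{x..}" D]
    by (simp add: at_within_Ici_at_right)
qed

lemma lderiv_eq:
  assumes "(f has_real_derivative D) (at x within {..x})"
  shows "lderiv f x = D"
  unfolding lderiv_def
proof (rule the_equality)
  show "(f has_real_derivative D) (at x within {..x})" by fact
  fix D' assume "(f has_real_derivative D') (at x within {..x})"
  then show "D' = D" using assms has_field_derivative_unique[of f D' x "{..x}" D]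
    by (simp add: at_within_Iic_at_left)
qed

lemma rderiv_lin: "rderiv (\<lambda>y. a * y) z = (a::real)"
  by (rule rderiv_eq) (auto intro!: derivative_eq_intros)

locale cvx =
  fixes f :: "real \<Rightarrow> real"
  assumes cv: "convex_on {0..} f" and mo: "mono_on {0..} f"
    and df: "\<And>x. x > 0 \<Longrightarrow> f differentiable (at x)"
begin

lemma slope_mono:
  assumes "0 < a" "a \<le> b"
  shows "(f a - f 0) / a \<le> (f b - f 0) / b"
proof (cases "a = b")
  case False
  then have "a < b" using assms by simp
  from convex_on_slope_le(1)[OF cv, of 0 b a] assms this
  show ?thesis by (simp add: divide_simps) (metis minus_diff_eq mult_minus_left)
qed simp

lemma slope_nonneg: "0 < a \<Longrightarrow> 0 \<le> (f a - f 0) / a"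
  using mo by (auto simp: mono_on_def)

definition d0 where "d0 = Inf ((\<lambda>a. (f a - f 0) / a) ` ({0<..} \<inter> UNIV))"

lemma d0_deriv: "(f has_real_derivative d0) (at 0 within {0..})"
proof -
  have "((\<lambda>a. (f a - f 0) / a) \<longlongrightarrow> d0) (at 0 within ({0<..} \<inter> UNIV))"
    unfolding d0_def
    by (rule Lim_right_bound[where K=0]) (auto intro: slope_mono slope_nonneg)
  moreover have "at (0::real) within ({0<..} \<inter> UNIV) = at 0 within {0..}"
    unfolding at_within_def by (rule arg_cong[where f="\<lambda>S. inf _ (principal S)"]) auto
  ultimately show ?thesis unfolding has_field_derivative_iff by simp
qed

lemma rderiv0: "rderiv f 0 = d0"
  by (rule rderiv_eq) (use d0_deriv in simp)

lemma d0_le_slope: assumes "s > 0" shows "d0 \<le> (f s - f 0) / s"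
proof -
  have "((\<lambda>a. (f a - f 0) / (a - 0)) \<longlongrightarrow> d0) (at_right 0)"
    using d0_deriv unfolding has_field_derivative_iff by (simp add: at_within_Ici_at_right)
  moreover have "eventually (\<lambda>a. (f a - f 0) / (a - 0) \<le> (f s - f 0) / s) (at_right 0)"
    using eventually_at_right_real[OF assms] by eventually_elim (auto intro: slope_mono)
  ultimately show ?thesis by (intro tendsto_upperbound) auto
qed

lemma d0_nonneg: "d0 \<ge> 0"
  using d0_le_slope[of 1] slope_nonneg[of 1] d0_deriv
proof -
  have "((\<lambda>a. (f a - f 0) / (a - 0)) \<longlongrightarrow> d0) (at_right 0)"
    using d0_deriv unfolding has_field_derivative_iff by (simp add: at_within_Ici_at_right)
  moreover have "eventually (\<lambda>a. 0 \<le> (f a - f 0) / (a - 0)) (at_right 0)"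
    using eventually_at_right_real[OF zero_less_one] by eventually_elim (auto intro: slope_nonneg)
  ultimately show ?thesis by (intro tendsto_lowerbound) auto
qed

lemma below0: assumes "y \<ge> 0" shows "f y \<ge> f 0 + d0 * y"
proof (cases "y = 0")
  case False
  then have "y > 0" using assms by simp
  with d0_le_slope[OF this] show ?thesis by (simp add: field_simps)
qed simp

lemma derivpos: assumes "t > 0" shows "(f has_real_derivative deriv f t) (at t)"
  using df[OF assms] by (simp add: DERIV_deriv_iff_real_differentiable)

lemma rderivpos: "t > 0 \<Longrightarrow> rderiv f t = deriv f t"
  by (rule rderiv_eq) (use derivpos has_field_derivative_at_within in blast)

lemma tangent: assumes "t > 0" "y \<ge> 0" shows "f y \<ge> f t + deriv f t * (y - t)"
  using convex_on_imp_above_tangent[OF cv, of t y "deriv f t"] assms derivpos[OF assms(1)]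
  by (auto simp: has_field_derivative_at_within)

lemma d0_le_deriv: assumes "t > 0" shows "d0 \<le> deriv f t"
proof -
  have "f 0 \<ge> f t + deriv f t * (0 - t)" using tangent[OF assms, of 0] by simp
  then have "(f t - f 0) / t \<le> deriv f t" using assms by (simp add: field_simps)
  with d0_le_slope[OF assms] show ?thesis by simp
qed

lemma chord: assumes "0 \<le> b" "b \<le> a" shows "f a - f b \<ge> d0 * (a - b)"
proof (cases "b = 0")
  case True thus ?thesis using below0[of a] assms by simp
next
  case False
  then have "b > 0" using assms by simp
  have "d0 * (a - b) \<le> deriv f b * (a - b)"
    using d0_le_deriv[OF \<open>b > 0\<close>] assms by (intro mult_right_mono) auto
  with tangent[OF \<open>b > 0\<close>, of a] assms show ?thesis by linarith
qed

lemma subgrad: assumes "t \<ge> 0" "y \<ge> 0" shows "f y \<ge> f t + rderiv f t * (y - t)"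
proof (cases "t = 0")
  case True thus ?thesis using below0[OF assms(2)] rderiv0 by simp
next
  case False thus ?thesis using tangent[of t y] rderivpos[of t] assms by simp
qed

lemma rd_ge_d0: "t \<ge> 0 \<Longrightarrow> rderiv f t \<ge> rderiv f 0"
  using d0_le_deriv rderivpos rderiv0 by (cases "t = 0") auto

end




locale pp =
  fixes p :: "real \<Rightarrow> real"
  assumes a2: "assumption2 p"
begin

lemma pcont: "continuous_on {0..} p" using a2 by (simp add: assumption2_def)
lemma pnonneg: "q \<ge> 0 \<Longrightarrow> p q \<ge> 0" using a2 by (simp add: assumption2_def)
lemma pmono: "0 \<le> a \<Longrightarrow> a \<le> b \<Longrightarrow> p b \<le> p a" using a2 by (simp add: assumption2_def)

lemma pint: "0 \<le> a \<Longrightarrow> p integrable_on {a..b}"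
  by (rule integrable_continuous_interval) (rule continuous_on_subset[OF pcont], auto)

lemma icomb: "0 \<le> a \<Longrightarrow> a \<le> b \<Longrightarrow> integral {0..b} p = integral {0..a} p + integral {a..b} p"
  using Henstock_Kurzweil_Integration.integral_combine[where a=0 and c=a and b=b and f=p] pint[of 0 b] by (simp add: add.commute)

lemma iup: assumes "0 \<le> a" "a \<le> b" shows "integral {a..b} p \<le> (b - a) * p a"
proof -
  have "integral {a..b} p \<le> integral {a..b} (\<lambda>_. p a)"
    by (rule integral_le) (use pint assms pmono in auto)
  then show ?thesis using assms by simp
qed

lemma ilow: assumes "0 \<le> a" "a \<le> b" shows "(b - a) * p b \<le> integral {a..b} p"
proof -
  have "integral {a..b} (\<lambda>_. p b) \<le> integral {a..b} p"
    by (rule integral_le) (use pint assms pmono in auto)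
  then show ?thesis using assms by simp
qed

lemma lder: assumes "X > 0" shows "(p has_real_derivative lderiv p X) (at X within {..X})"
proof -
  obtain D where "(p has_real_derivative D) (at X within {..X})"
    using a2 assms by (auto simp: assumption2_def)
  then show ?thesis using lderiv_eq by metis
qed

lemma lder_nonpos: assumes "X > 0" shows "lderiv p X \<le> 0"
proof -
  have "((\<lambda>y. (p y - p X) / (y - X)) \<longlongrightarrow> lderiv p X) (at_left X)"
    using lder[OF assms] unfolding has_field_derivative_iff by (simp add: at_within_Iic_at_left)
  moreover have "eventually (\<lambda>y. (p y - p X) / (y - X) \<le> 0) (at_left X)"
    using eventually_at_left_real[OF assms] by eventually_elim
      (auto intro!: divide_nonneg_neg simp: pmono)
  ultimately show ?thesis by (intro tendsto_upperbound) auto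
qed

lemma int_eq_const: assumes "X > 0" "integral {0..X} p = X * p X" shows "p 0 = p X"
proof -
  have c: "continuous_on (cbox 0 X) (\<lambda>q. p q - p X)"
    by (intro continuous_intros continuous_on_subset[OF pcont]) auto
  have "((\<lambda>q. p q - p X) has_integral 0) (cbox 0 X)"
  proof -
    have "((\<lambda>q. p q - p X) has_integral (integral {0..X} p - X * p X)) {0..X}"
      using has_integral_diff[OF integrable_integral[OF pint[of 0 X]] has_integral_const_real[of "p X" 0 X]]
        assms by simp
    then show ?thesis using assms by simp
  qed
  from has_integral_0_cbox_imp_0[OF c _ this, of 0] assms show ?thesis
    by (auto simp: pmono)
qed

lemma convex_flat:
  assumes cp: "convex_on {0..} p" and "X > 0" "lderiv p X = 0" "X \<le> q"
  shows "p X \<le> p q"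
proof (cases "X = q")
  case False
  then have "X < q" using assms by simp
  have "((\<lambda>y. (p y - p X) / (y - X)) \<longlongrightarrow> 0) (at_left X)"
    using lder[OF assms(2)] assms(3) unfolding has_field_derivative_iff by (simp add: at_within_Iic_at_left)
  moreover have "eventually (\<lambda>y. (p y - p X) / (y - X) \<le> (p X - p q) / (X - q)) (at_left X)"
    using eventually_at_left_real[OF assms(2)]
  proof eventually_elim
    case (elim y)
    from convex_on_slope_le[OF cp, of y q X] elim \<open>X < q\<close>
    have "(p y - p X) / (y - X) \<le> (p y - p q) / (y - q)" "(p y - p q) / (y - q) \<le> (p X - p q) / (X - q)"
      by auto
    then show ?case by linarith
  qed
  ultimately have "0 \<le> (p X - p q) / (X - q)" by (intro tendsto_upperbound) auto
  with \<open>X < q\<close> show ?thesis by (simp add: divide_simps split: if_splits)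
qed simp

end




lemma cvxC: assumes "assumption1 N C" "n < N" shows "cvx (C n)"
  using assms unfolding assumption1_def cvx_def by auto

lemma welfare_lin: "welfare N p (\<lambda>n y. al n * y) y = integral {0..total N y} p - (\<Sum>n<N. al n * y n)"
  by (simp add: welfare_def)

lemma total_nonneg: "nonneg_vec N y \<Longrightarrow> 0 \<le> total N y"
  unfolding total_def nonneg_vec_def by (auto intro: sum_nonneg)

lemma exist_lin:
  assumes a2: "assumption2 p" and N: "0 < N" and R: "R > 0"
    and pR: "p R \<le> Min (al ` {..<N})" and p0: "Min (al ` {..<N}) < p 0"
  shows "\<exists>z. social_optimum N p (\<lambda>n y. al n * y) z"
proof -
  interpret pp p by (rule pp.intro) (rule a2)
  have fin: "finite (al ` {..<N})" "al ` {..<N} \<noteq> {}" using N by auto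
  obtain k where k: "k < N" "al k = Min (al ` {..<N})"
    using Min_in[OF fin] by auto
  have kmin: "\<And>n. n < N \<Longrightarrow> al k \<le> al n" using k fin by simp
  have "continuous_on {0..R} p" by (rule continuous_on_subset[OF pcont]) auto
  then obtain Q where Q: "0 \<le> Q" "Q \<le> R" "p Q = al k"
    using IVT2'[of p R "al k" 0] pR p0 k R by auto
  define z where "z = (\<lambda>n. if n = k then Q else (0::real))"
  have tz: "total N z = Q" using k by (simp add: total_def z_def)
  have sz: "(\<Sum>n<N. al n * z n) = al k * Q"
    using k by (simp add: z_def if_distrib cong: if_cong)
  show ?thesis
  proof (intro exI[of _ z])
    show "social_optimum N p (\<lambda>n y. al n * y) z"
      unfolding social_optimum_def
    proof (intro conjI allI impI)
      show "nonneg_vec N z" using Q by (simp add: nonneg_vec_def z_def)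
      fix y assume y: "nonneg_vec N y"
      define Y where "Y = total N y"
      have Y0: "0 \<le> Y" using total_nonneg[OF y] Y_def by simp
      have "(\<Sum>n<N. al k * y n) \<le> (\<Sum>n<N. al n * y n)"
        using y kmin by (intro sum_mono mult_right_mono) (auto simp: nonneg_vec_def)
      then have s: "al k * Y \<le> (\<Sum>n<N. al n * y n)"
        by (simp add: Y_def total_def sum_distrib_left)
      have "integral {0..Y} p - al k * Y \<le> integral {0..Q} p - al k * Q"
      proof (cases "Q \<le> Y")
        case True
        then show ?thesis using icomb[OF Q(1) True] iup[OF Q(1) True] Q(3)
          by (simp add: algebra_simps)
      next
        case False
        then show ?thesis using icomb[OF Y0, of Q] ilow[OF Y0, of Q] Q(3)
          by (simp add: algebra_simps)
      qed
      then show "welfare N p (\<lambda>n y. al n * y) y \<le> welfare N p (\<lambda>n y. al n * y) z"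
        unfolding welfare_lin tz sz using s Y_def by simp
    qed
  qed
qed

lemma exist_orig:
  fixes C :: "nat \<Rightarrow> real \<Rightarrow> real" and p :: "real \<Rightarrow> real"
  assumes N: "0 < N" and a1: "assumption1 N C" and a2: "assumption2 p" and a3: "assumption3 N p C"
  shows "\<exists>z. social_optimum N p C z"
proof -
  interpret pp p by (rule pp.intro) (rule a2)
  obtain R where R: "R > 0" "p R \<le> min_marginal_cost_at_0 N C"
    using a3 by (auto simp: assumption3_def)
  define d where "d n = rderiv (C n) 0" for n
  define m0 where "m0 = Min (d ` {..<N})"
  have fin: "finite (d ` {..<N})" "d ` {..<N} \<noteq> {}" using N by auto
  have pRm: "p R \<le> m0" using R(2) by (simp add: min_marginal_cost_at_0_def m0_def d_def)
  have m0d: "\<And>n. n < N \<Longrightarrow> m0 \<le> d n" using fin m0_def by simp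
  have Ccont: "\<And>n. n < N \<Longrightarrow> continuous_on {0..} (C n)"
    using a1 by (simp add: assumption1_def)
  have C0: "\<And>n. n < N \<Longrightarrow> C n 0 = 0"
    using a1 by (simp add: assumption1_def)
  have chord: "\<And>n a b. n < N \<Longrightarrow> 0 \<le> b \<Longrightarrow> b \<le> a \<Longrightarrow> C n a - C n b \<ge> d n * (a - b)"
  proof -
    fix n and a b :: real assume "n < N" "0 \<le> b" "b \<le> a"
    interpret c: cvx "C n" using cvxC[OF a1 \<open>n < N\<close>] .
    show "C n a - C n b \<ge> d n * (a - b)" using c.chord[OF \<open>0 \<le> b\<close> \<open>b \<le> a\<close>] c.rderiv0 d_def by simp
  qed
  define K where "K = PiE UNIV (\<lambda>n. if n < N then {0..R} else {0::real})"
  have "compactin (product_topology (\<lambda>i. euclidean) UNIV) K"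
    unfolding K_def by (subst compactin_PiE) auto
  then have cK: "compact K" by (simp add: euclidean_product_topology)
  have K0: "(\<lambda>_. 0) \<in> K" using R by (auto simp: K_def)
  have Kcoord: "\<And>y n. y \<in> K \<Longrightarrow> n < N \<Longrightarrow> 0 \<le> y n \<and> y n \<le> R"
  proof -
    fix y n assume yK: "y \<in> K" and n: "n < N"
    have "y n \<in> (if n < N then {0..R} else {0})" using yK unfolding K_def by (rule PiE_mem) simp
    with n show "0 \<le> y n \<and> y n \<le> R" by simp
  qed
  have coord: "\<And>n. continuous_on K (\<lambda>y. y n)"
    by (rule continuous_on_subset[OF continuous_on_product_coordinates]) auto
  have tcont: "continuous_on K (total N)"
    unfolding total_def by (intro continuous_on_sum coord)
  define B where "B = real N * R"
  have tB: "total N ` K \<subseteq> {0..B}"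
  proof
    fix t assume "t \<in> total N ` K"
    then obtain y where y: "y \<in> K" "t = total N y" by auto
    have "(\<Sum>n<N. y n) \<le> (\<Sum>n<N. R)" by (intro sum_mono) (use Kcoord y in auto)
    moreover have "0 \<le> (\<Sum>n<N. y n)" by (intro sum_nonneg) (use Kcoord y in auto)
    ultimately show "t \<in> {0..B}" using y by (simp add: total_def B_def)
  qed
  have icont: "continuous_on {0..B} (\<lambda>t. integral {0..t} p)"
    by (rule indefinite_integral_continuous_1) (rule pint, simp)
  have Wcont: "continuous_on K (welfare N p C)"
    unfolding welfare_def
  proof (intro continuous_on_diff continuous_on_sum)
    show "continuous_on K (\<lambda>y. integral {0..total N y} p)"
      using continuous_on_compose2[OF icont tcont tB] .
    fix n assume "n \<in> {..<N}"
    then show "continuous_on K (\<lambda>y. C n (y n))"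
      using continuous_on_compose2[OF Ccont coord, of n n] Kcoord by auto
  qed
  obtain z where z: "z \<in> K" "\<And>y. y \<in> K \<Longrightarrow> welfare N p C y \<le> welfare N p C z"
    using continuous_attains_sup[OF cK _ Wcont] K0 by blast
  show ?thesis
  proof (intro exI[of _ z])
    show "social_optimum N p C z"
      unfolding social_optimum_def
    proof (intro conjI allI impI)
      show "nonneg_vec N z" using Kcoord z(1) by (simp add: nonneg_vec_def)
      fix y assume y: "nonneg_vec N y"
      define Y where "Y = total N y"
      have yn: "\<And>n. n < N \<Longrightarrow> 0 \<le> y n" using y by (simp add: nonneg_vec_def)
      have ynY: "\<And>n. n < N \<Longrightarrow> y n \<le> Y"
        unfolding Y_def total_def by (rule member_le_sum) (use yn in auto)
      show "welfare N p C y \<le> welfare N p C z"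
      proof (cases "Y \<le> R")
        case True
        define y' where "y' = (\<lambda>n. if n < N then y n else 0)"
        have "y' \<in> K" using True ynY yn by (auto simp: K_def y'_def) (meson order_trans)
        moreover have "welfare N p C y' = welfare N p C y"
          by (simp add: welfare_def total_def y'_def)
        ultimately show ?thesis using z by metis
      next
        case False
        define t where "t = R / Y"
        have Ypos: "Y > 0" using False R by simp
        have t: "0 < t" "t < 1" using False R Ypos by (auto simp: t_def)
        define y' where "y' = (\<lambda>n. if n < N then t * y n else 0)"
        have "y' \<in> K"
        proof -
          have "\<And>n. n < N \<Longrightarrow> t * y n \<le> R"
          proof -
            fix n assume "n < N"
            have "t * y n \<le> t * Y" using ynY[OF \<open>n < N\<close>] t by (simp add: mult_left_mono)
            also have "\<dots> = R" using Ypos by (simp add: t_def)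
            finally show "t * y n \<le> R" .
          qed
          then show ?thesis using yn t by (auto simp: K_def y'_def)
        qed
        have tY: "t * Y = R" using Ypos by (simp add: t_def)
        have "total N y' = (\<Sum>n<N. t * y n)" by (simp add: total_def y'_def)
        also have "\<dots> = t * Y" by (simp add: Y_def total_def sum_distrib_left)
        finally have ty': "total N y' = R" using tY by simp
        have "(\<Sum>n<N. m0 * ((1 - t) * y n)) \<le> (\<Sum>n<N. C n (y n) - C n (t * y n))"
        proof (rule sum_mono)
          fix n assume "n \<in> {..<N}"
          then have n: "n < N" by simp
          have "m0 * ((1 - t) * y n) \<le> d n * ((1 - t) * y n)"
            using m0d[OF n] yn[OF n] t by (intro mult_right_mono) auto
          also have "\<dots> = d n * (y n - t * y n)" by (simp add: algebra_simps)
          also have "\<dots> \<le> C n (y n) - C n (t * y n)"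
            using chord[OF n, of "t * y n" "y n"] yn[OF n] t by (simp add: mult_left_le_one_le)
          finally show "m0 * ((1 - t) * y n) \<le> C n (y n) - C n (t * y n)" .
        qed
        moreover have "(\<Sum>n<N. m0 * ((1 - t) * y n)) = m0 * ((1 - t) * Y)"
          by (simp add: Y_def total_def sum_distrib_left)
        moreover have "m0 * ((1 - t) * Y) = m0 * (Y - R)" using tY by (simp add: algebra_simps)
        ultimately have Cdiff: "m0 * (Y - R) \<le> (\<Sum>n<N. C n (y n)) - (\<Sum>n<N. C n (t * y n))"
          by (simp add: sum_subtractf)
        have "integral {0..Y} p \<le> integral {0..R} p + (Y - R) * p R"
          using icomb[of R Y] iup[of R Y] R False by simp
        moreover have "(Y - R) * p R \<le> m0 * (Y - R)"
          using pRm False by (simp add: mult.commute mult_left_mono)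
        moreover have "welfare N p C y' = integral {0..R} p - (\<Sum>n<N. C n (t * y n))"
          using ty' by (simp add: welfare_def y'_def)
        ultimately have "welfare N p C y \<le> welfare N p C y'"
          using Cdiff by (simp add: welfare_def Y_def)
        then show ?thesis using z \<open>y' \<in> K\<close> by (meson order_trans)
      qed
    qed
  qed
qed




theorem proposition6:
  fixes N :: nat and p :: "real \<Rightarrow> real" and C :: "nat \<Rightarrow> real \<Rightarrow> real"
    and x :: "nat \<Rightarrow> real"
  assumes "0 < N"
    and "assumption1 N C" and "assumption2 p" and "assumption3 N p C" and "assumption4 N p C"
    and "convex_on {0..} p"
    and "cournot_candidate N p C x"
    and "\<not> social_optimum N p C x"
  shows "assumption1 N (\<lambda>n y. rderiv (C n) (x n) * y) \<and>
         assumption2 p \<and>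
         assumption3 N p (\<lambda>n y. rderiv (C n) (x n) * y) \<and>
         assumption4 N p (\<lambda>n y. rderiv (C n) (x n) * y) \<and>
         cournot_candidate N p (\<lambda>n y. rderiv (C n) (x n) * y) x \<and>
         0 < efficiency N p (\<lambda>n y. rderiv (C n) (x n) * y) x \<and>
         efficiency N p (\<lambda>n y. rderiv (C n) (x n) * y) x \<le> efficiency N p C x"
proof -
  note N = assms(1) and a1 = assms(2) and a2 = assms(3) and a3 = assms(4) and a4 = assms(5)
    and cp = assms(6) and cc = assms(7)
  interpret pp p by (rule pp.intro) (rule a2)
  define al where "al n = rderiv (C n) (x n)" for n
  define Cm where "Cm = (\<lambda>n y. al n * (y::real))"
  have geq: "(\<lambda>n y. rderiv (C n) (x n) * y) = Cm" by (simp add: Cm_def al_def)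
  define d where "d n = rderiv (C n) 0" for n
  define X where "X = total N x"
  define L where "L = lderiv p X"
  have xn: "\<And>n. n < N \<Longrightarrow> 0 \<le> x n" using cc by (simp add: cournot_candidate_def nonneg_vec_def)
  have cc1: "\<And>n. n < N \<Longrightarrow> 0 < x n \<Longrightarrow> al n \<le> p X + x n * L"
    using cc by (simp add: cournot_candidate_def al_def X_def L_def)
  have cc2: "\<And>n. n < N \<Longrightarrow> al n \<ge> p X + x n * rderiv p X"
    using cc by (simp add: cournot_candidate_def al_def X_def)
  have ald: "\<And>n. n < N \<Longrightarrow> d n \<le> al n"
    unfolding al_def d_def using xn by (intro cvx.rd_ge_d0 cvxC[OF a1])
  have d0: "\<And>n. n < N \<Longrightarrow> 0 \<le> d n"
  proof -
    fix n assume n: "n < N"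
    interpret c: cvx "C n" using cvxC[OF a1 n] .
    show "0 \<le> d n" using c.d0_nonneg c.rderiv0 d_def by simp
  qed
  have al0: "\<And>n. n < N \<Longrightarrow> 0 \<le> al n" using ald d0 by (meson order_trans)
  have sub: "\<And>n y. n < N \<Longrightarrow> 0 \<le> y \<Longrightarrow> al n * y - C n y \<le> al n * x n - C n (x n)"
  proof -
    fix n and y :: real assume n: "n < N" and y: "0 \<le> y"
    interpret c: cvx "C n" using cvxC[OF a1 n] .
    show "al n * y - C n y \<le> al n * x n - C n (x n)"
      using c.subgrad[OF xn[OF n] y] by (simp add: al_def algebra_simps)
  qed
  have C0: "\<And>n. n < N \<Longrightarrow> C n 0 = 0" using a1 by (simp add: assumption1_def)
  have finN: "finite {..<N}" "{..<N} \<noteq> {}" using N by auto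
  have fd: "finite (d ` {..<N})" "d ` {..<N} \<noteq> {}" using N by auto
  have fal: "finite (al ` {..<N})" "al ` {..<N} \<noteq> {}" using N by auto
  have mmC: "min_marginal_cost_at_0 N C = Min (d ` {..<N})"
    by (simp add: min_marginal_cost_at_0_def d_def)
  have mmCm: "min_marginal_cost_at_0 N Cm = Min (al ` {..<N})"
    by (simp add: min_marginal_cost_at_0_def Cm_def rderiv_lin)
  obtain R where R: "R > 0" "p R \<le> Min (d ` {..<N})"
    using a3 by (auto simp: assumption3_def mmC)
  have p0: "Min (d ` {..<N}) < p 0" using a4 by (simp add: assumption4_def mmC)
  obtain k where k: "k < N" "al k = Min (al ` {..<N})" using Min_in[OF fal] by auto
  have kmin: "\<And>n. n < N \<Longrightarrow> al k \<le> al n" using k fal by simp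
  have dal: "Min (d ` {..<N}) \<le> al k" using ald[OF k(1)] fd k(1) by (meson Min_le imageI lessThan_iff order_trans)
  have X0: "X > 0"
  proof (rule ccontr)
    assume "\<not> X > 0"
    moreover have "X \<ge> 0" unfolding X_def total_def using xn by (intro sum_nonneg) auto
    ultimately have "X = 0" by simp
    then have "\<forall>n\<in>{..<N}. x n = 0" using xn sum_nonneg_eq_0_iff[of "{..<N}" x]
      by (simp add: X_def total_def)
    then have "\<And>n. n < N \<Longrightarrow> d n \<ge> p 0" using cc2 \<open>X = 0\<close> by (simp add: al_def d_def)
    then have "Min (d ` {..<N}) \<ge> p 0" using fd by simp
    with p0 show False by simp
  qed
  define S where "S = (\<Sum>n<N. al n * x n)"
  define Q2 where "Q2 = (\<Sum>n<N. x n * x n)"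
  have "S \<le> (\<Sum>n<N. x n * (p X + x n * L))"
    unfolding S_def
  proof (rule sum_mono)
    fix n assume "n \<in> {..<N}"
    then have n: "n < N" by simp
    show "al n * x n \<le> x n * (p X + x n * L)"
    proof (cases "x n = 0")
      case False
      then have "x n > 0" using xn[OF n] by simp
      then show ?thesis using cc1[OF n] by (simp add: mult.commute mult_left_mono)
    qed simp
  qed
  also have "\<dots> = X * p X + L * Q2"
    by (simp add: X_def total_def Q2_def sum.distrib algebra_simps sum_distrib_left sum_distrib_right)
  finally have SX: "S \<le> X * p X + L * Q2" .
  have LQ: "L * Q2 \<le> 0"
    using lder_nonpos[OF X0] by (simp add: L_def Q2_def mult_nonpos_nonneg sum_nonneg)
  have IX: "X * p X \<le> integral {0..X} p" using ilow[of 0 X] X0 by simp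
  have Wpos: "integral {0..X} p - S > 0"
  proof (rule ccontr)
    assume "\<not> ?thesis"
    then have IS: "integral {0..X} p \<le> S" by simp
    have Ieq: "integral {0..X} p = X * p X" using IS SX LQ IX by linarith
    have "L * Q2 = 0" using IS SX LQ IX by linarith
    moreover have "Q2 > 0"
    proof -
      have "\<exists>n<N. x n > 0"
      proof (rule ccontr)
        assume "\<not> (\<exists>n<N. x n > 0)"
        then have "\<forall>n\<in>{..<N}. x n = 0" using xn by force
        then have "X = 0" by (simp add: X_def total_def)
        with X0 show False by simp
      qed
      then obtain n where n: "n < N" "x n > 0" by blast
      have "x n * x n \<le> Q2" unfolding Q2_def by (rule member_le_sum) (use n in auto)
      moreover have "x n * x n > 0" using n by simp
      ultimately show ?thesis by simp
    qed
    ultimately have L0: "L = 0" by simp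
    have pX: "p 0 = p X" using int_eq_const[OF X0 Ieq] .
    have "p X \<le> p R"
    proof (cases "R \<le> X")
      case True then show ?thesis using pmono R by simp
    next
      case False then show ?thesis using convex_flat[OF cp X0, of R] L0 L_def by simp
    qed
    with pX R p0 show False by simp
  qed
  have A4m: "al k < p 0"
  proof -
    have "al k * X \<le> S" unfolding S_def
    proof -
      have "(\<Sum>n<N. al k * x n) \<le> (\<Sum>n<N. al n * x n)"
        using kmin xn by (intro sum_mono mult_right_mono) auto
      then show "al k * X \<le> (\<Sum>n<N. al n * x n)" by (simp add: X_def total_def sum_distrib_left)
    qed
    moreover have "integral {0..X} p \<le> X * p 0" using iup[of 0 X] X0 by simp
    ultimately have "al k * X < p 0 * X" using Wpos by (simp add: mult.commute)
    then show ?thesis using X0 by simp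
  qed
  have exm: "\<exists>z. social_optimum N p Cm z"
    unfolding Cm_def using exist_lin[OF a2 N R(1), of al] R(2) dal k A4m by simp
  have exo: "\<exists>z. social_optimum N p C z" by (rule exist_orig[OF N a1 a2 a3])
  define zm where "zm = (SOME z. social_optimum N p Cm z)"
  define zo where "zo = (SOME z. social_optimum N p C z)"
  have zm: "social_optimum N p Cm zm" unfolding zm_def using someI_ex[OF exm] .
  have zo: "social_optimum N p C zo" unfolding zo_def using someI_ex[OF exo] .
  have xnn: "nonneg_vec N x" using cc by (simp add: cournot_candidate_def)
  define a where "a = welfare N p Cm x"
  define b where "b = welfare N p Cm zm"
  define c where "c = welfare N p C zo"
  define D where "D = (\<Sum>n<N. al n * x n - C n (x n))"
  have a: "a = integral {0..X} p - S" by (simp add: a_def Cm_def welfare_def X_def S_def)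
  have apos: "a > 0" using Wpos a by simp
  have ab: "a \<le> b" using zm xnn unfolding a_def b_def social_optimum_def by blast
  have D0: "D \<ge> 0" unfolding D_def
  proof (intro sum_nonneg)
    fix n assume "n \<in> {..<N}"
    then have n: "n < N" by simp
    show "0 \<le> al n * x n - C n (x n)" using sub[OF n, of 0] C0[OF n] by simp
  qed
  have Wx: "welfare N p C x = a + D"
    by (simp add: a D_def welfare_def X_def S_def sum_subtractf)
  have cW: "a + D \<le> c" using zo xnn Wx unfolding c_def social_optimum_def by metis
  have "c \<le> welfare N p Cm zo + D"
  proof -
    have zon: "\<And>n. n < N \<Longrightarrow> 0 \<le> zo n" using zo by (simp add: social_optimum_def nonneg_vec_def)
    have "(\<Sum>n<N. al n * zo n - C n (zo n)) \<le> D"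
      unfolding D_def using sub zon by (intro sum_mono) auto
    then show ?thesis by (simp add: c_def welfare_def Cm_def sum_subtractf)
  qed
  moreover have "welfare N p Cm zo \<le> b"
    using zm zo unfolding b_def social_optimum_def by blast
  ultimately have cb: "c \<le> b + D" by simp
  have effm: "efficiency N p Cm x = a / b" by (simp add: efficiency_def a_def b_def zm_def)
  have effo: "efficiency N p C x = (a + D) / c" by (simp add: efficiency_def Wx c_def zo_def)
  have bpos: "b > 0" using apos ab by simp
  have cpos: "c > 0" using apos D0 cW by simp
  have ineq: "a / b \<le> (a + D) / c"
  proof -
    have "a * c \<le> a * (b + D)" using cb apos by (simp add: mult_left_mono)
    also have "\<dots> \<le> (a + D) * b" using ab D0 by (simp add: algebra_simps mult_left_mono)
    finally show ?thesis using bpos cpos by (simp add: divide_simps)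
  qed
  have A1m: "assumption1 N Cm"
    unfolding assumption1_def
  proof (intro allI impI conjI)
    fix n assume n: "n < N"
    show "convex_on {0..} (Cm n)" unfolding Cm_def
      by (intro convex_on_cmul convex_on_ident[THEN iffD2]) (auto simp: al0[OF n])
    show "continuous_on {0..} (Cm n)" unfolding Cm_def by (intro continuous_intros)
    show "mono_on {0..} (Cm n)" unfolding Cm_def using al0[OF n]
      by (auto simp: mono_on_def mult_left_mono)
    show "Cm n differentiable at y" if "y > 0" for y unfolding Cm_def by auto
    have "deriv (Cm n) = (\<lambda>_. al n)"
      unfolding Cm_def by (rule ext, rule DERIV_imp_deriv) (auto intro!: derivative_eq_intros)
    then show "continuous_on {0<..} (deriv (Cm n))" by simp
    show "Cm n 0 = 0" by (simp add: Cm_def)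
  qed
  have A3m: "assumption3 N p Cm"
    unfolding assumption3_def mmCm using R dal k by auto
  have A4m': "assumption4 N p Cm"
    unfolding assumption4_def mmCm using A4m k by simp
  have CCm: "cournot_candidate N p Cm x"
    using cc by (simp add: cournot_candidate_def Cm_def rderiv_lin al_def)
  show ?thesis unfolding geq
    using A1m a2 A3m A4m' CCm effm effo ineq apos bpos by (simp add: divide_pos_pos)
qed


end
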